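(* Let $4.999\le r\le 5$ and $1\le\theta\le 2.13$, and let $q(x)=1-(r-\theta)x+(r-2\theta)x^2+\theta x^3$. Then all three roots of $q$ are real: one root $\alpha$ satisfies $\alpha<-1$, and the other two roots $\beta,\gamma$ satisfy $0<\gamma<0.56<\beta<1$.
   Context: Equivalently $q(x)=1+rx(x-1)+\theta x(x-1)^2=(1-x/\alpha)(1-x/\beta)(1-x/\gamma)$ with $\alpha,\beta,\gamma$ the roots of $q$. *)

theory Defs
  imports Complex_Main
begin

definition qpoly :: "real \<Rightarrow> real \<Rightarrow> real \<Rightarrow> real" where
  "qpoly r \<theta> x = 1 - (r - \<theta>) * x + (r - 2 * \<theta>) * x ^ 2 + \<theta> * x ^ 3"

end

theory Submission
  imports Defs
begin

lemma quad_zero: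
  fixes e0 e1 e2 a b c :: real
  assumes "a \<noteq> b" "a \<noteq> c" "b \<noteq> c"
    and "e0 + e1*a + e2*a^2 = 0" "e0 + e1*b + e2*b^2 = 0" "e0 + e1*c + e2*c^2 = 0"
  shows "e0 = 0 \<and> e1 = 0 \<and> e2 = 0"
proof -
  have "(a-b)*(e1 + e2*(a+b)) = 0" using assms(4,5) by (simp add: algebra_simps power2_eq_square)
  hence h1: "e1 + e2*(a+b) = 0" using assms(1) by simp
  have "(a-c)*(e1 + e2*(a+c)) = 0" using assms(4,6) by (simp add: algebra_simps power2_eq_square)
  hence h2: "e1 + e2*(a+c) = 0" using assms(2) by simp
  have "e2*(b-c) = (e1 + e2*(a+b)) - (e1 + e2*(a+c))" by (simp add: algebra_simps)
  hence "e2*(b-c) = 0" using h1 h2 by simp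
  hence "e2 = 0" using assms(3) by simp
  moreover have "e1 = 0" using h1 \<open>e2 = 0\<close> by simp
  ultimately show ?thesis using assms(4) by simp
qed

lemma cont_q: "continuous_on S (qpoly r t)"
  unfolding qpoly_def by (intro continuous_intros)

lemma root_between:
  assumes "a < b" "(qpoly r t a > 0 \<and> qpoly r t b < 0) \<or> (qpoly r t a < 0 \<and> qpoly r t b > 0)"
  shows "\<exists>x. a < x \<and> x < b \<and> qpoly r t x = 0"
proof -
  have "\<exists>x\<ge>a. x \<le> b \<and> qpoly r t x = 0"
    using assms IVT' [of "qpoly r t" a 0 b] IVT2' [of "qpoly r t" b 0 a] cont_q
    by (meson less_imp_le)
  then obtain x where "a \<le> x" "x \<le> b" "qpoly r t x = 0" by blast
  moreover have "x \<noteq> a" "x \<noteq> b" using assms calculation by auto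
  ultimately show ?thesis by (metis order_le_less)
qed

theorem mainTheorem7:
  fixes r \<theta> :: real
  assumes "4.999 \<le> r" and "r \<le> 5" and "1 \<le> \<theta>" and "\<theta> \<le> 2.13"
  shows "\<exists>\<alpha> \<beta> \<gamma> :: real.
           (\<forall>x. qpoly r \<theta> x = \<theta> * (x - \<alpha>) * (x - \<beta>) * (x - \<gamma>)) \<and>
           \<alpha> < -1 \<and> 0 < \<gamma> \<and> \<gamma> < 0.56 \<and> 0.56 < \<beta> \<and> \<beta> < 1"
proof -
  have q0: "qpoly r \<theta> 0 > 0" by (simp add: qpoly_def)
  have q1: "qpoly r \<theta> 1 > 0" by (simp add: qpoly_def)
  have e56: "qpoly r \<theta> 0.56 = 1 - 0.2464*r + 0.108416*\<theta>" by (simp add: qpoly_def power2_eq_square power3_eq_cube field_simps)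
  have q56: "qpoly r \<theta> 0.56 < 0" using assms unfolding e56 by (simp add: field_simps)
  have qm1: "qpoly r \<theta> (-1) > 0" using assms by (simp add: qpoly_def)
  have qm10: "qpoly r \<theta> (-10) < 0" using assms by (simp add: qpoly_def)
  obtain g where g: "0 < g" "g < 0.56" "qpoly r \<theta> g = 0"
    using root_between[of 0 "0.56" r \<theta>] q0 q56 by auto
  obtain b where b: "0.56 < b" "b < 1" "qpoly r \<theta> b = 0"
    using root_between[of "0.56" 1 r \<theta>] q1 q56 by auto
  obtain a where a: "-10 < a" "a < -1" "qpoly r \<theta> a = 0"
    using root_between[of "-10" "-1" r \<theta>] qm1 qm10 by auto
  have "\<forall>x. qpoly r \<theta> x = \<theta> * (x - a) * (x - b) * (x - g)"
  proof
    fix x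
    define e2 where "e2 = (r - 2*\<theta>) + \<theta>*(a+b+g)"
    define e1 where "e1 = -(r-\<theta>) - \<theta>*(a*b+a*g+b*g)"
    define e0 where "e0 = 1 + \<theta>*a*b*g"
    have D: "\<And>y. qpoly r \<theta> y - \<theta> * (y - a) * (y - b) * (y - g) = e0 + e1*y + e2*y^2"
      unfolding qpoly_def e0_def e1_def e2_def by (simp add: algebra_simps power2_eq_square power3_eq_cube)
    have "e0 = 0 \<and> e1 = 0 \<and> e2 = 0"
      apply (rule quad_zero[of a b g])
      using a b g D[of a] D[of b] D[of g] by auto
    then show "qpoly r \<theta> x = \<theta> * (x - a) * (x - b) * (x - g)" using D[of x] by simp
  qed
  then show ?thesis using a b g by blast
qed

end
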